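(* Let $(M,g)$ be a spacetime with hyperbolic symmetry whose metric, on the covering manifold $\tilde M$, is written in areal coordinates $(t,\theta,x,y)$ as \[ ds^2=-e^{2\mu}dt^2+e^{2\lambda}d\theta^2+t^2\left(dx^2+\sinh^2x\,dy^2\right), \] with $\mu,\lambda$ functions of $(t,\theta)$ only, $t>0$. Let $f$ be a distribution function (number density of particles) on the mass shell, written in terms of the coordinates $(t,\theta,x,y)$ and the corresponding canonical momenta $(p^1,p^2,p^3)$ (with $p^0$ determined by the mass-shell condition). Assume that (the pull-back of) $f$ is invariant under the action on $T\tilde M$ induced by the action of $G$ on $\tilde M$. Then $f$ depends only on \[ t,\ \theta,\ p^1,\ (p^2)^2+\sinh^2x\,(p^3)^2 . \]
   Context: Hyperbolic symmetry: $M\cong\mathbb{R}\times S^1\times F$ with $F$ a compact orientable surface of genus $>1$; $\tilde M\cong \mathbb{R}\times S^1\times\tilde F$ is the covering obtained from the universal cover $\tilde F$ of $F$, identified with the hyperbolic plane. $G$ is the identity component of the isometry group of the hyperbolic plane; it acts on $\tilde M$ via its action on the $\tilde F$ factor (in the coordinates above, on the hyperbolic surfaces $\{t,\theta=\text{const}\}$ with metric $t^2(dx^2+\sinh^2x\,dy^2)$), and the metric and matter fields pulled back to $\tilde M$ are invariant under this action. The mass shell is $\{g_{\alpha\beta}p^\alpha p^\beta=-1,\ p^0>0\}$ (particles of unit rest mass); the canonical momenta $p^\alpha$ are the components of a tangent vector in the coordinate basis. *)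

theory Defs
  imports "HOL-Analysis.Analysis"
begin

text \<open>Model of the hyperbolic plane (universal cover of F): the Poincare disk
  {z. norm z < 1} with metric 4 |dz|^2 / (1 - |z|^2)^2.
  The coordinates (x,y) of the paper (metric dx^2 + sinh^2 x dy^2) are geodesic polar
  coordinates about the origin: z = tanh(x/2) e^{iy}, valid for x > 0.\<close>

definition hchart :: "real \<Rightarrow> real \<Rightarrow> complex" where
  "hchart x y = complex_of_real (tanh (x / 2)) * cis y"

definition hpush :: "real \<Rightarrow> real \<Rightarrow> real \<Rightarrow> real \<Rightarrow> complex" where
  "hpush x y p2 p3 =
     p2 *\<^sub>R vector_derivative (\<lambda>s. hchart s y) (at x)
   + p3 *\<^sub>R vector_derivative (\<lambda>s. hchart x s) (at y)"

text \<open>G = identity component of the isometry group of the hyperbolic plane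
  = orientation preserving isometries of the disk = the disk automorphisms
  z \<mapsto> e^{i alpha} (z - a) / (1 - conj a z), |a| < 1.\<close>

definition hypG :: "(complex \<Rightarrow> complex) set" where
  "hypG = {\<lambda>z. cis \<alpha> * (z - a) / (1 - cnj a * z) | \<alpha> a. norm a < 1}"

text \<open>Invariance of the distribution function f(t,theta,x,y,p1,p2,p3) under the action of G
  on the tangent bundle induced by its action on the hyperbolic factor: the action fixes
  t, theta (and p0, p1) and maps (point, tangent vector) by (phi, d phi). Since phi is
  holomorphic, its differential is multiplication by the complex derivative.\<close>

definition G_invariant ::
  "(real \<Rightarrow> real \<Rightarrow> real \<Rightarrow> real \<Rightarrow> real \<Rightarrow> real \<Rightarrow> real \<Rightarrow> real) \<Rightarrow> bool" where
  "G_invariant f \<longleftrightarrow>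
     (\<forall>\<phi>\<in>hypG. \<forall>t \<theta> x y p1 p2 p3 x' y' p2' p3'.
        t > 0 \<longrightarrow> x > 0 \<longrightarrow> x' > 0 \<longrightarrow>
        hchart x' y' = \<phi> (hchart x y) \<longrightarrow>
        hpush x' y' p2' p3' = deriv \<phi> (hchart x y) * hpush x y p2 p3 \<longrightarrow>
        f t \<theta> x' y' p1 p2' p3' = f t \<theta> x y p1 p2 p3)"

end

theory Submission
  imports Defs
begin


lemma vd1: "vector_derivative (\<lambda>s. hchart s y) (at x) = complex_of_real ((1 - tanh(x/2)^2)/2) * cis y"
proof -
  have "((\<lambda>s. hchart s y) has_vector_derivative complex_of_real ((1 - tanh(x/2)^2)/2) * cis y) (at x)"
    unfolding hchart_def
    by (auto intro!: derivative_eq_intros has_vector_derivative_mult_left simp: cosh_real_pos[of "x/2", THEN order.strict_implies_not_eq, THEN not_sym])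
  then show ?thesis by (rule vector_derivative_at)
qed

lemma vd2: "vector_derivative (\<lambda>s. hchart x s) (at y) = complex_of_real (tanh(x/2)) * (\<i> * cis y)"
proof -
  have "((\<lambda>s. hchart x s) has_vector_derivative complex_of_real (tanh(x/2)) * (\<i> * cis y)) (at y)"
    unfolding hchart_def has_vector_derivative_def
    by (auto intro!: derivative_eq_intros ext simp: algebra_simps)
  then show ?thesis by (rule vector_derivative_at)
qed



lemma deriv_mob:
  assumes "1 - cnj a * z \<noteq> 0"
  shows "deriv (\<lambda>z. cis \<alpha> * (z - a) / (1 - cnj a * z)) z = cis \<alpha> * (1 - cnj a * a) / (1 - cnj a * z)^2"
proof (rule DERIV_imp_deriv)
  show "((\<lambda>z. cis \<alpha> * (z - a) / (1 - cnj a * z)) has_field_derivative cis \<alpha> * (1 - cnj a * a) / (1 - cnj a * z)^2) (at z)"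
    using assms by (auto intro!: derivative_eq_intros simp: field_simps power2_eq_square)
qed

lemma alg1: "D \<noteq> 0 \<Longrightarrow> C \<noteq> 0 \<Longrightarrow> X \<noteq> 0 \<Longrightarrow> (e*C/D) * (X*k/(D*C)) / (X/D)^2 = e*k/(X::complex)"
  by (simp add: field_simps power2_eq_square)

lemma alg2: "A \<noteq> 0 \<Longrightarrow> D \<noteq> 0 \<Longrightarrow> X \<noteq> 0 \<Longrightarrow> A / D * (c * X / A) / (X / D) = (c::complex)"
  by (simp add: field_simps)

lemma mob_exists:
  fixes z0 e :: complex and c :: real
  assumes z0: "norm z0 < 1" and e: "norm e = 1" and c: "0 < c" "c < 1"
  shows "\<exists>\<phi>\<in>hypG. \<phi> z0 = complex_of_real c \<and>
           deriv \<phi> z0 = e * complex_of_real ((1 - c^2) / (1 - (norm z0)^2))"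
proof -
  define w where "w = cnj z0"
  have zn: "complex_of_real (norm z0 ^ 2) = w * z0"
  proof -
    have "complex_of_real (norm z0 ^ 2) = z0 * cnj z0" by (rule complex_norm_square)
    then show ?thesis unfolding w_def by (simp only: mult.commute)
  qed
  have n1: "norm z0 ^ 2 < 1" using z0 by (simp add: power_less_one_iff)
  have wz1: "w * z0 \<noteq> 1" using n1 zn by (metis of_real_eq_1_iff order.irrefl)
  have e0: "e \<noteq> 0" using e by auto
  have ee: "cnj e = 1 / e"
  proof -
    have "complex_of_real ((norm e) ^ 2) = e * cnj e" by (rule complex_norm_square)
    then have "e * cnj e = 1" using e by simp
    then show ?thesis using e0 by (simp add: field_simps)
  qed
  define D where "D = 1 - c * e * z0"
  define A where "A = e - c * w"
  define a where "a = (e * z0 - c) / A"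
  define u where "u = A / D"
  have "c * norm z0 < 1 * 1"
    using c z0 by (intro mult_strict_mono) auto
  moreover have "norm (c * e * z0) = c * norm z0"
    using c e by (simp add: norm_mult)
  ultimately have "norm (c * e * z0) < 1" by simp
  then have D0: "D \<noteq> 0" unfolding D_def by auto
  have cD: "cnj D = 1 - c * w / e" unfolding D_def w_def by (simp add: ee)
  have AD: "A = e * cnj D" unfolding A_def cD using e0 by (simp add: field_simps)
  have nAD: "norm A = norm D" using AD e by (simp add: norm_mult)
  have A0: "A \<noteq> 0" using nAD D0 by auto
  have cD0: "cnj D \<noteq> 0" using D0 by simp
  have cnja: "cnj a = (w - c * e) / D"
  proof -
    have "cnj a = (cnj z0 / e - c) / cnj A" unfolding a_def by (simp add: ee)
    also have "cnj A = 1/e - c * z0" unfolding A_def w_def by (simp add: ee)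
    also have "(cnj z0 / e - c) / (1/e - c * z0) = (w - c * e) / D"
      using e0 D0 unfolding D_def w_def by (simp add: field_simps)
    finally show ?thesis .
  qed
  have den: "1 - cnj a * z0 = (1 - w * z0) / D"
    using D0 unfolding cnja D_def by (simp add: field_simps)
  have num: "z0 - a = c * (1 - w * z0) / A"
    using A0 unfolding a_def A_def by (simp add: field_simps)
  have eD: "e * cnj D = e - c * w" using AD A_def by simp
  have aa: "1 - cnj a * a = (1 - w * z0) * (1 - c^2) / (D * cnj D)"
  proof -
    have 1: "cnj a * a = ((w - c*e) * (e*z0 - c)) / (D * (e * cnj D))"
      unfolding cnja by (simp add: a_def AD)
    have 2: "D * (e * cnj D) - (w - c*e) * (e*z0 - c) = e * ((1 - w * z0) * (1 - c^2))"
      by (simp only: eD) (simp add: D_def algebra_simps power2_eq_square)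
    have 3: "D * (e * cnj D) \<noteq> 0" using D0 cD0 e0 by simp
    have "1 - cnj a * a = (D * (e * cnj D) - (w - c*e) * (e*z0 - c)) / (D * (e * cnj D))"
      unfolding 1 using 3 by (simp add: diff_divide_distrib)
    also have "\<dots> = e * ((1 - w * z0) * (1 - c^2)) / (e * (D * cnj D))"
      unfolding 2 by (simp add: ac_simps)
    also have "\<dots> = (1 - w * z0) * (1 - c^2) / (D * cnj D)"
      using e0 by (rule mult_divide_mult_cancel_left)
    finally show ?thesis .
  qed
  have wz0: "1 - w * z0 \<noteq> 0" using wz1 by simp
  have na: "norm a < 1"
  proof -
    have h1: "complex_of_real (norm a ^ 2) = cnj a * a"
      using complex_norm_square[of a] by (simp only: mult.commute)
    have h2: "complex_of_real (norm D ^ 2) = D * cnj D" by (rule complex_norm_square)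
    have "complex_of_real (1 - norm a ^ 2) = 1 - cnj a * a"
      by (simp only: of_real_diff of_real_1 h1)
    also have "\<dots> = (1 - w * z0) * (1 - c^2) / (D * cnj D)" by (rule aa)
    also have "\<dots> = complex_of_real ((1 - norm z0 ^ 2) * (1 - c^2) / norm D ^ 2)"
      by (simp only: of_real_divide of_real_mult of_real_diff of_real_1 h2 zn)
    finally have "1 - norm a ^ 2 = (1 - norm z0 ^ 2) * (1 - c^2) / norm D ^ 2"
      by (simp only: of_real_eq_iff)
    moreover have "(1 - norm z0 ^ 2) * (1 - c^2) / norm D ^ 2 > 0"
      using n1 c D0 by (intro divide_pos_pos mult_pos_pos) (auto simp: power_less_one_iff)
    ultimately have "norm a ^ 2 < 1" by linarith
    then show ?thesis by (simp add: power_less_one_iff)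
  qed
  have nu: "norm u = 1" unfolding u_def using nAD D0 by (simp add: norm_divide)
  have cu: "cis (Arg u) = u"
  proof -
    have "u \<noteq> 0" using nu by auto
    then have "cis (Arg u) = sgn u" by (rule cis_Arg)
    also have "\<dots> = u" using nu by (simp add: sgn_div_norm)
    finally show ?thesis .
  qed
  define \<phi> where "\<phi> = (\<lambda>z. cis (Arg u) * (z - a) / (1 - cnj a * z))"
  have "\<phi> \<in> hypG" unfolding \<phi>_def hypG_def mem_Collect_eq using na by (intro exI conjI) (rule refl)
  moreover have "\<phi> z0 = complex_of_real c"
    unfolding \<phi>_def using A0 D0 wz0 by (simp only: cu num den) (simp add: u_def alg2)
  moreover have "deriv \<phi> z0 = e * complex_of_real ((1 - c^2) / (1 - (norm z0)^2))"
  proof -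
    have "deriv \<phi> z0 = u * (1 - cnj a * a) / (1 - cnj a * z0)^2"
    proof -
      have "1 - cnj a * z0 \<noteq> 0" unfolding den using wz0 D0 by simp
      from deriv_mob[OF this, of "Arg u"] show ?thesis unfolding \<phi>_def cu .
    qed
    also have "\<dots> = (e * cnj D / D) * ((1 - w * z0) * (1 - c^2) / (D * cnj D)) / ((1 - w * z0) / D)^2"
      by (simp only: aa den u_def AD)
    also have "\<dots> = e * (1 - c^2) / (1 - w * z0)"
      using D0 cD0 wz0 by (rule alg1)
    also have "\<dots> = e * complex_of_real ((1 - c^2) / (1 - (norm z0)^2))"
    proof -
      have "complex_of_real ((1 - c^2) / (1 - (norm z0)^2)) = complex_of_real (1 - c^2) / (1 - complex_of_real ((norm z0)^2))"
        by (simp only: of_real_divide of_real_diff of_real_1)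
      also have "\<dots> = (1 - c^2) / (1 - w * z0)" by (simp only: zn of_real_diff of_real_1)
      finally show ?thesis by (simp only: times_divide_eq_right)
    qed
    finally show ?thesis .
  qed
  ultimately show ?thesis by blast
qed


lemma tanh_half: "tanh (x/2) * 2 = (1 - tanh (x/2)^2) * sinh (x::real)"
proof -
  have c0: "cosh (x/2) \<noteq> 0" using cosh_real_pos[of "x/2"] by simp
  have s: "sinh x = 2 * sinh (x/2) * cosh (x/2)" using sinh_double[of "x/2"] by simp
  have cs: "cosh (x/2)^2 = sinh (x/2)^2 + 1" by (rule cosh_square_eq)
  have "1 - tanh (x/2)^2 = (cosh (x/2)^2 - sinh (x/2)^2) / cosh (x/2)^2"
    unfolding tanh_def using c0 by (simp add: field_simps)
  also have "\<dots> = 1 / cosh (x/2)^2" using cs by simp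
  finally have t: "1 - tanh (x/2)^2 = 1 / cosh (x/2)^2" .
  show ?thesis unfolding t s unfolding tanh_def using c0 by (simp add: field_simps power2_eq_square)
qed

lemma hpush_eq: "hpush x y p2 p3 = cis y * Complex ((1 - tanh(x/2)^2)/2 * p2) (tanh(x/2) * p3)"
  unfolding hpush_def vd1 vd2 by (simp add: complex_eq_iff scaleR_conv_of_real algebra_simps)

lemma norm_hpush:
  assumes "x > 0"
  shows "norm (hpush x y p2 p3) = (1 - tanh(x/2)^2)/2 * sqrt (p2^2 + (sinh x)^2 * p3^2)"
proof -
  define r where "r = tanh (x/2)"
  have r1: "r^2 < 1" unfolding r_def using tanh_real_bounds[of "x/2"] by (auto simp: abs_square_less_1 abs_less_iff)
  have rs: "r = (1 - r^2)/2 * sinh x" using tanh_half[of x] unfolding r_def by simp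
  have "norm (hpush x y p2 p3) = sqrt (((1 - r^2)/2 * p2)^2 + (r * p3)^2)"
    unfolding hpush_eq r_def norm_mult by (simp add: cmod_def)
  also have "((1 - r^2)/2 * p2)^2 + (r * p3)^2 = ((1 - r^2)/2)^2 * (p2^2 + (sinh x)^2 * p3^2)"
  proof -
    have rp: "r * p3 = (1 - r^2)/2 * sinh x * p3" using rs by simp
    show ?thesis unfolding rp by (simp add: field_simps power2_eq_square)
  qed
  also have "sqrt \<dots> = (1 - r^2)/2 * sqrt (p2^2 + (sinh x)^2 * p3^2)"
    using r1 by (simp add: real_sqrt_mult)
  finally show ?thesis unfolding r_def .
qed

theorem lemma1:
  fixes f :: "real \<Rightarrow> real \<Rightarrow> real \<Rightarrow> real \<Rightarrow> real \<Rightarrow> real \<Rightarrow> real \<Rightarrow> real"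
  assumes "G_invariant f"
  shows "\<exists>F :: real \<Rightarrow> real \<Rightarrow> real \<Rightarrow> real \<Rightarrow> real.
           \<forall>t \<theta> x y p1 p2 p3. t > 0 \<longrightarrow> x > 0 \<longrightarrow>
             f t \<theta> x y p1 p2 p3 = F t \<theta> p1 (p2\<^sup>2 + (sinh x)\<^sup>2 * p3\<^sup>2)"
proof (intro exI allI impI)
  fix t \<theta> x y p1 p2 p3 :: real
  assume t: "t > 0" and x: "x > 0"
  define N where "N = p2\<^sup>2 + (sinh x)\<^sup>2 * p3\<^sup>2"
  define r where "r = tanh (x/2)"
  define c where "c = tanh (1/2::real)"
  define v where "v = hpush x y p2 p3"
  define e where "e = (if v = 0 then 1 else cnj v / complex_of_real (norm v))"
  have ne: "norm e = 1" unfolding e_def by (simp add: norm_divide)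
  have ev: "e * v = complex_of_real (norm v)"
    unfolding e_def by (auto simp: complex_norm_square[symmetric] field_simps power2_eq_square)
  have r01: "0 < r" "r < 1" unfolding r_def using x tanh_real_lt_1 by auto
  have c01: "0 < c" "c < 1" unfolding c_def using tanh_real_lt_1 by auto
  have nz: "norm (hchart x y) = r" unfolding hchart_def r_def using r01 by (simp add: norm_mult r_def)
  obtain \<phi> where \<phi>: "\<phi> \<in> hypG" "\<phi> (hchart x y) = complex_of_real c"
    "deriv \<phi> (hchart x y) = e * complex_of_real ((1 - c^2) / (1 - (norm (hchart x y))^2))"
    using mob_exists[of "hchart x y" e c] nz r01 ne c01 by blast
  have h1: "hchart 1 0 = \<phi> (hchart x y)" using \<phi>(2) unfolding hchart_def c_def by simp
  have nv: "norm v = (1 - r^2)/2 * sqrt N" unfolding v_def N_def r_def using norm_hpush[OF x] .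
  have r2: "1 - r^2 \<noteq> 0" using r01 abs_square_less_1[of r] by simp
  have h2: "hpush 1 0 (sqrt N) 0 = deriv \<phi> (hchart x y) * hpush x y p2 p3"
  proof -
    have "deriv \<phi> (hchart x y) * hpush x y p2 p3 = complex_of_real ((1 - c^2) / (1 - r^2)) * (e * v)"
      unfolding \<phi>(3) nz v_def by (simp add: ac_simps)
    also have "\<dots> = complex_of_real ((1 - c^2) / (1 - r^2) * ((1 - r^2)/2 * sqrt N))"
      unfolding ev nv by (simp only: of_real_mult)
    also have "\<dots> = complex_of_real (sqrt N * ((1 - c^2)/2))"
      using r2 by (intro arg_cong[where f=complex_of_real]) (simp add: field_simps)
    also have "\<dots> = hpush 1 0 (sqrt N) 0"
      unfolding hpush_eq c_def by (simp add: complex_eq_iff)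
    finally show ?thesis by simp
  qed
  have "f t \<theta> 1 0 p1 (sqrt N) 0 = f t \<theta> x y p1 p2 p3"
    using assms \<phi>(1) t x h1 h2 unfolding G_invariant_def by simp
  then show "f t \<theta> x y p1 p2 p3 = (\<lambda>t \<theta> p1 n. f t \<theta> 1 0 p1 (sqrt n) 0) t \<theta> p1 (p2\<^sup>2 + (sinh x)\<^sup>2 * p3\<^sup>2)"
    unfolding N_def by simp
qed

end
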